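(* Let $G=\overline{B(K_m,K_n)}$ and let $S$ be a semi-transitive orientation of $G$. Then every vertex $x$ of $G$ is of type A, type B, or type C with respect to the clique not containing $x$.
   Context: $\overline{B(K_m,K_n)}$ denotes a graph whose vertex set is the disjoint union of two cliques $K_m$ and $K_n$ (of sizes $m,n$) with arbitrary edges between them. An orientation is semi-transitive if it is acyclic and shortcut-free, where a shortcut is an induced subgraph on vertices $v_0,v_1,\dots,v_t$ ($t\ge 3$) such that $v_0\to v_1\to\cdots\to v_t$ is a directed path, $v_0\to v_t$ is an edge, and some pair $v_i,v_j$ is non-adjacent. Any acyclic orientation induces a transitive orientation on each clique; so for a clique $K$ with $l$ vertices there is a directed Hamiltonian path $\vec P=p_1\to p_2\to\cdots\to p_l$ with $p_i\to p_j$ iff $i<j$ ($p_1$ the source, $p_l$ the sink). For a vertex $x$ in one clique, let $K'$ be the other clique with path $p_1\to\cdots\to p_l$. Then $x$ is of type A if its neighbours in $K'$ form a (possibly empty) set of consecutive vertices $p_a,p_{a+1},\dots,p_b$ of $\vec P$ and all edges between $x$ and these are directed away from $x$; type B if the same holds with all these edges directed towards $x$; type C if there are $1\le s<t\le l$ such that the neighbours of $x$ in $K'$ are exactly $p_1,\dots,p_s$ and $p_t,\dots,p_l$, with $p_i\to x$ for $i\le s$ and $x\to p_i$ for $i\ge t$ (the middle group $p_{s+1},\dots,p_{t-1}$ of non-neighbours may be empty). For type C, $\{p_1,\dots,p_s\}$ is the source-group and $\{p_t,\dots,p_l\}$ the sink-group of $x$. *)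

theory Defs
  imports Main
begin

text \<open>The graph co-B(K_m,K_n): vertex set K1 \<union> K2 (disjoint cliques, finite),
  a symmetric irreflexive edge relation E on K1 \<union> K2 in which each Ki is a clique;
  edges between K1 and K2 are arbitrary.\<close>
definition coB_graph :: "'a set \<Rightarrow> 'a set \<Rightarrow> ('a \<Rightarrow> 'a \<Rightarrow> bool) \<Rightarrow> bool" where
  "coB_graph K1 K2 E \<longleftrightarrow>
     finite K1 \<and> finite K2 \<and> K1 \<inter> K2 = {} \<and>
     (\<forall>x y. E x y \<longrightarrow> x \<in> K1 \<union> K2 \<and> y \<in> K1 \<union> K2) \<and>
     (\<forall>x y. E x y \<longrightarrow> E y x) \<and> (\<forall>x. \<not> E x x) \<and>
     (\<forall>x\<in>K1. \<forall>y\<in>K1. x \<noteq> y \<longrightarrow> E x y) \<and>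
     (\<forall>x\<in>K2. \<forall>y\<in>K2. x \<noteq> y \<longrightarrow> E x y)"

definition orientation :: "('a \<Rightarrow> 'a \<Rightarrow> bool) \<Rightarrow> ('a \<Rightarrow> 'a \<Rightarrow> bool) \<Rightarrow> bool" where
  "orientation E D \<longleftrightarrow>
     (\<forall>x y. D x y \<longrightarrow> E x y) \<and> (\<forall>x y. E x y \<longrightarrow> D x y \<or> D y x) \<and>
     (\<forall>x y. \<not> (D x y \<and> D y x))"

definition acyclic_orient :: "('a \<Rightarrow> 'a \<Rightarrow> bool) \<Rightarrow> bool" where
  "acyclic_orient D \<longleftrightarrow> acyclic {(x, y). D x y}"

definition is_shortcut :: "('a \<Rightarrow> 'a \<Rightarrow> bool) \<Rightarrow> ('a \<Rightarrow> 'a \<Rightarrow> bool) \<Rightarrow> 'a list \<Rightarrow> bool" where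
  "is_shortcut E D vs \<longleftrightarrow>
     length vs \<ge> 4 \<and> distinct vs \<and>
     (\<forall>i. i + 1 < length vs \<longrightarrow> D (vs ! i) (vs ! (i + 1))) \<and>
     D (hd vs) (last vs) \<and>
     (\<exists>i j. i < length vs \<and> j < length vs \<and> i \<noteq> j \<and> \<not> E (vs ! i) (vs ! j))"

definition semi_transitive :: "'a set \<Rightarrow> ('a \<Rightarrow> 'a \<Rightarrow> bool) \<Rightarrow> ('a \<Rightarrow> 'a \<Rightarrow> bool) \<Rightarrow> bool" where
  "semi_transitive V E D \<longleftrightarrow>
     orientation E D \<and> acyclic_orient D \<and>
     \<not> (\<exists>vs. set vs \<subseteq> V \<and> is_shortcut E D vs)"

text \<open>ps = [p_1, ..., p_l] is the directed Hamiltonian path of the clique K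
  (p_i \<rightarrow> p_j iff i < j). We use 1-based access p i = ps ! (i - 1).\<close>
definition ham_path :: "('a \<Rightarrow> 'a \<Rightarrow> bool) \<Rightarrow> 'a set \<Rightarrow> 'a list \<Rightarrow> bool" where
  "ham_path D K ps \<longleftrightarrow> distinct ps \<and> set ps = K \<and>
     (\<forall>i j. i < length ps \<longrightarrow> j < length ps \<longrightarrow> (D (ps ! i) (ps ! j) \<longleftrightarrow> i < j))"

definition pth :: "'a list \<Rightarrow> nat \<Rightarrow> 'a" where
  "pth ps i = ps ! (i - 1)"

definition nbrs_in :: "('a \<Rightarrow> 'a \<Rightarrow> bool) \<Rightarrow> 'a \<Rightarrow> 'a set \<Rightarrow> 'a set" where
  "nbrs_in E x K = {y \<in> K. E x y}"

definition typeA :: "('a \<Rightarrow> 'a \<Rightarrow> bool) \<Rightarrow> ('a \<Rightarrow> 'a \<Rightarrow> bool) \<Rightarrow> 'a list \<Rightarrow> 'a \<Rightarrow> bool" where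
  "typeA E D ps x \<longleftrightarrow>
     (\<exists>a b. 1 \<le> a \<and> b \<le> length ps \<and>
        nbrs_in E x (set ps) = {pth ps i | i. a \<le> i \<and> i \<le> b}) \<and>
     (\<forall>y \<in> nbrs_in E x (set ps). D x y)"

definition typeB :: "('a \<Rightarrow> 'a \<Rightarrow> bool) \<Rightarrow> ('a \<Rightarrow> 'a \<Rightarrow> bool) \<Rightarrow> 'a list \<Rightarrow> 'a \<Rightarrow> bool" where
  "typeB E D ps x \<longleftrightarrow>
     (\<exists>a b. 1 \<le> a \<and> b \<le> length ps \<and>
        nbrs_in E x (set ps) = {pth ps i | i. a \<le> i \<and> i \<le> b}) \<and>
     (\<forall>y \<in> nbrs_in E x (set ps). D y x)"

definition typeC :: "('a \<Rightarrow> 'a \<Rightarrow> bool) \<Rightarrow> ('a \<Rightarrow> 'a \<Rightarrow> bool) \<Rightarrow> 'a list \<Rightarrow> 'a \<Rightarrow> bool" where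
  "typeC E D ps x \<longleftrightarrow>
     (\<exists>s t. 1 \<le> s \<and> s < t \<and> t \<le> length ps \<and>
        nbrs_in E x (set ps) =
          {pth ps i | i. 1 \<le> i \<and> i \<le> s} \<union> {pth ps i | i. t \<le> i \<and> i \<le> length ps} \<and>
        (\<forall>i. 1 \<le> i \<and> i \<le> s \<longrightarrow> D (pth ps i) x) \<and>
        (\<forall>i. t \<le> i \<and> i \<le> length ps \<longrightarrow> D x (pth ps i)))"

end

theory Submission
  imports Defs
begin

lemma no4:
  assumes st: "semi_transitive V E D" and V: "a\<in>V" "b\<in>V" "c\<in>V" "d\<in>V"
    and dis: "distinct [a,b,c,d]" and ab: "D a b" and bc: "D b c" and cd: "D c d" and ad: "D a d"
    and ne: "\<not> E u v" and u: "u \<in> {a,b,c,d}" and v: "v \<in> {a,b,c,d}" and uv: "u \<noteq> v"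
  shows False
proof -
  let ?vs = "[a,b,c,d]"
  have "u \<in> set ?vs" "v \<in> set ?vs" using u v by auto
  then obtain i j where i: "i < length ?vs" "?vs ! i = u" and j: "j < length ?vs" "?vs ! j = v"
    by (metis in_set_conv_nth)
  have "i \<noteq> j" using i j uv by auto
  have chain: "\<forall>k. k + 1 < length ?vs \<longrightarrow> D (?vs ! k) (?vs ! (k + 1))"
  proof (intro allI impI)
    fix k assume "k + 1 < length ?vs"
    then have "k = 0 \<or> k = 1 \<or> k = 2" by auto
    then show "D (?vs ! k) (?vs ! (k + 1))" using ab bc cd by auto
  qed
  have "is_shortcut E D ?vs"
  proof -
    have "\<exists>i j. i < length ?vs \<and> j < length ?vs \<and> i \<noteq> j \<and> \<not> E (?vs ! i) (?vs ! j)"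
      using i j ne \<open>i \<noteq> j\<close> by blast
    moreover have "length ?vs \<ge> 4" "hd ?vs = a" "last ?vs = d" by auto
    ultimately show ?thesis unfolding is_shortcut_def using dis chain ad by simp
  qed
  moreover have "set ?vs \<subseteq> V" using V by auto
  ultimately show False using st unfolding semi_transitive_def by blast
qed

lemma nocyc:
  assumes st: "semi_transitive V E D" and "D a b" "D b c" "D c a"
  shows False
proof -
  let ?r = "{(x, y). D x y}"
  have "(a, a) \<in> ?r\<^sup>+"
    by (rule trancl_into_trancl[OF trancl_into_trancl[OF r_into_trancl]]) (use assms(2-4) in auto)
  then show False using st unfolding semi_transitive_def acyclic_orient_def acyclic_def by blast
qed

lemma pth_img: "1 \<le> a \<Longrightarrow> {pth ps i | i. a \<le> i \<and> i \<le> b} = (\<lambda>j. ps!j) ` {a-1..<b}"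
proof (intro equalityI subsetI)
  fix y assume "1 \<le> a" "y \<in> {pth ps i | i. a \<le> i \<and> i \<le> b}"
  then obtain i where "a \<le> i" "i \<le> b" "y = ps ! (i - 1)" unfolding pth_def by auto
  then show "y \<in> (\<lambda>j. ps!j) ` {a-1..<b}" using \<open>1 \<le> a\<close> by (intro image_eqI[of _ _ "i - 1"]) auto
next
  fix y assume "1 \<le> a" "y \<in> (\<lambda>j. ps!j) ` {a-1..<b}"
  then obtain j where "a - 1 \<le> j" "j < b" "y = ps ! j" by auto
  then show "y \<in> {pth ps i | i. a \<le> i \<and> i \<le> b}" using \<open>1 \<le> a\<close> unfolding pth_def
    by (intro CollectI exI[of _ "j + 1"]) auto
qed

lemma key:
  assumes st: "semi_transitive V E D" and ham: "ham_path D K ps" and KV: "K \<subseteq> V"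
    and xV: "x \<in> V" and xK: "x \<notin> K" and Esym: "\<forall>u v. E u v \<longrightarrow> E v u"
  shows "typeA E D ps x \<or> typeB E D ps x \<or> typeC E D ps x"
proof -
  define l where "l = length ps"
  have or: "orientation E D" using st unfolding semi_transitive_def by blast
  have dps: "distinct ps" and sps: "set ps = K"
    and hp: "\<And>i j. i < l \<Longrightarrow> j < l \<Longrightarrow> D (ps ! i) (ps ! j) \<longleftrightarrow> i < j"
    using ham unfolding ham_path_def l_def by auto
  have inV: "\<And>j. j < l \<Longrightarrow> ps ! j \<in> V" using sps KV l_def nth_mem by blast
  have nx: "\<And>j. j < l \<Longrightarrow> ps ! j \<noteq> x" using sps xK l_def nth_mem by blast
  have neq: "\<And>i j. i < l \<Longrightarrow> j < l \<Longrightarrow> i \<noteq> j \<Longrightarrow> ps ! i \<noteq> ps ! j"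
    using dps l_def by (simp add: nth_eq_iff_index_eq)
  have anti: "\<And>u v. \<not> (D u v \<and> D v u)" using or unfolding orientation_def by blast
  define I where "I = {j. j < l \<and> D (ps ! j) x}"
  define Ou where "Ou = {j. j < l \<and> D x (ps ! j)}"
  have nb: "nbrs_in E x (set ps) = (\<lambda>j. ps!j) ` (I \<union> Ou)"
  proof (intro equalityI subsetI)
    fix y assume "y \<in> nbrs_in E x (set ps)"
    then have y: "y \<in> set ps" "E x y" unfolding nbrs_in_def by auto
    then obtain j where j: "j < l" "y = ps ! j" by (metis in_set_conv_nth l_def)
    have "D x y \<or> D y x" using y or unfolding orientation_def by blast
    then show "y \<in> (\<lambda>j. ps!j) ` (I \<union> Ou)" using j unfolding I_def Ou_def by auto
  next
    fix y assume "y \<in> (\<lambda>j. ps!j) ` (I \<union> Ou)"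
    then obtain j where j: "j \<in> I \<union> Ou" "y = ps ! j" by auto
    then have "j < l" "D x y \<or> D y x" unfolding I_def Ou_def by auto
    then have "E x y" using or Esym unfolding orientation_def by blast
    then show "y \<in> nbrs_in E x (set ps)" using j \<open>j < l\<close> unfolding nbrs_in_def l_def by auto
  qed
  have nonadj: "\<And>j. j < l \<Longrightarrow> j \<notin> I \<Longrightarrow> j \<notin> Ou \<Longrightarrow> \<not> E (ps ! j) x"
    using or unfolding orientation_def I_def Ou_def by blast
  have finI: "finite I" and finO: "finite Ou" unfolding I_def Ou_def by auto
  have Il: "\<And>j. j \<in> I \<Longrightarrow> j < l" and Ol: "\<And>j. j \<in> Ou \<Longrightarrow> j < l" unfolding I_def Ou_def by auto
  have ID: "\<And>j. j \<in> I \<Longrightarrow> D (ps ! j) x" and OuD: "\<And>j. j \<in> Ou \<Longrightarrow> D x (ps ! j)"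
    unfolding I_def Ou_def by auto
  show ?thesis
  proof (cases "I = {}")
    case Ie: True
    show ?thesis
    proof (cases "Ou = {}")
      case True
      have e0: "nbrs_in E x (set ps) = {pth ps i | i. 1 \<le> i \<and> i \<le> 0}" using nb Ie True by simp
      have d0: "\<forall>y \<in> nbrs_in E x (set ps). D x y" using nb Ie True by simp
      have "(1::nat) \<le> 1" "(0::nat) \<le> length ps" by auto
      then have "typeA E D ps x" unfolding typeA_def using e0 d0 by blast
      then show ?thesis by blast
    next
      case False
      define a0 where "a0 = Min Ou"
      define b0 where "b0 = Max Ou"
      have a0O: "a0 \<in> Ou" and b0O: "b0 \<in> Ou" using False finO a0_def b0_def by auto
      have Oeq: "Ou = {a0..<b0+1}"
      proof (intro equalityI subsetI)
        fix k assume "k \<in> Ou" then show "k \<in> {a0..<b0+1}" using finO a0_def b0_def by (auto simp: less_Suc_eq_le)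
      next
        fix k assume k: "k \<in> {a0..<b0+1}"
        show "k \<in> Ou"
        proof (rule ccontr)
          assume kn: "k \<notin> Ou"
          have "k \<noteq> a0" "k \<noteq> b0" using kn a0O b0O by auto
          then have "a0 < k" "k < b0" using k by auto
          have "b0 < l" using b0O Ol by auto
          then have l3: "a0 < l" "k < l" "b0 < l" using \<open>a0 < k\<close> \<open>k < b0\<close> by auto
          have d: "distinct [x, ps!a0, ps!k, ps!b0]"
            using neq[OF l3(1) l3(2)] neq[OF l3(2) l3(3)] neq[OF l3(1) l3(3)] nx[OF l3(1)] nx[OF l3(2)] nx[OF l3(3)]
              \<open>a0 < k\<close> \<open>k < b0\<close> by auto
          have ne: "\<not> E (ps!k) x" using nonadj[OF l3(2)] kn Ie by blast
          have h1: "D (ps!a0) (ps!k)" using hp[OF l3(1) l3(2)] \<open>a0 < k\<close> by blast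
          have h2: "D (ps!k) (ps!b0)" using hp[OF l3(2) l3(3)] \<open>k < b0\<close> by blast
          show False
            by (rule no4[OF st xV inV[OF l3(1)] inV[OF l3(2)] inV[OF l3(3)] d OuD[OF a0O] h1 h2 OuD[OF b0O] ne])
              (use nx[OF l3(2)] in auto)
        qed
      qed
      have "nbrs_in E x (set ps) = {pth ps i | i. a0+1 \<le> i \<and> i \<le> b0+1}"
        using nb Ie Oeq pth_img[of "a0+1" ps "b0+1"] by simp
      moreover have "b0 + 1 \<le> length ps" using b0O Ol l_def by fastforce
      moreover have "\<forall>y \<in> nbrs_in E x (set ps). D x y" using nb Ie OuD by auto
      moreover have "(1::nat) \<le> a0 + 1" by simp
      ultimately have "typeA E D ps x" unfolding typeA_def by blast
      then show ?thesis by blast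
    qed
  next
    case Ine: False
    show ?thesis
    proof (cases "Ou = {}")
      case Oe: True
      define a0 where "a0 = Min I"
      define b0 where "b0 = Max I"
      have a0O: "a0 \<in> I" and b0O: "b0 \<in> I" using Ine finI a0_def b0_def by auto
      have Ieq: "I = {a0..<b0+1}"
      proof (intro equalityI subsetI)
        fix k assume "k \<in> I" then show "k \<in> {a0..<b0+1}" using finI a0_def b0_def by (auto simp: less_Suc_eq_le)
      next
        fix k assume k: "k \<in> {a0..<b0+1}"
        show "k \<in> I"
        proof (rule ccontr)
          assume kn: "k \<notin> I"
          have "k \<noteq> a0" "k \<noteq> b0" using kn a0O b0O by auto
          then have "a0 < k" "k < b0" using k by auto
          have "b0 < l" using b0O Il by auto
          then have l3: "a0 < l" "k < l" "b0 < l" using \<open>a0 < k\<close> \<open>k < b0\<close> by auto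
          have d: "distinct [ps!a0, ps!k, ps!b0, x]"
            using neq[OF l3(1) l3(2)] neq[OF l3(2) l3(3)] neq[OF l3(1) l3(3)] nx[OF l3(1)] nx[OF l3(2)] nx[OF l3(3)]
              \<open>a0 < k\<close> \<open>k < b0\<close> by auto
          have ne: "\<not> E (ps!k) x" using nonadj[OF l3(2)] kn Oe by blast
          have h1: "D (ps!a0) (ps!k)" using hp[OF l3(1) l3(2)] \<open>a0 < k\<close> by blast
          have h2: "D (ps!k) (ps!b0)" using hp[OF l3(2) l3(3)] \<open>k < b0\<close> by blast
          show False
            by (rule no4[OF st inV[OF l3(1)] inV[OF l3(2)] inV[OF l3(3)] xV d h1 h2 ID[OF b0O] ID[OF a0O] ne])
              (use nx[OF l3(2)] in auto)
        qed
      qed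
      have "nbrs_in E x (set ps) = {pth ps i | i. a0+1 \<le> i \<and> i \<le> b0+1}"
        using nb Oe Ieq pth_img[of "a0+1" ps "b0+1"] by simp
      moreover have "b0 + 1 \<le> length ps" using b0O Il l_def by fastforce
      moreover have "\<forall>y \<in> nbrs_in E x (set ps). D y x" using nb Oe ID by auto
      moreover have "(1::nat) \<le> a0 + 1" by simp
      ultimately have "typeB E D ps x" unfolding typeB_def by blast
      then show ?thesis by blast
    next
      case One: False
      define s0 where "s0 = Max I"
      define t0 where "t0 = Min Ou"
      have s0I: "s0 \<in> I" and t0O: "t0 \<in> Ou" using Ine One finI finO s0_def t0_def by auto
      have s0l: "s0 < l" and t0l: "t0 < l" using s0I t0O Il Ol by auto
      have st0: "s0 < t0"
      proof (rule ccontr)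
        assume "\<not> s0 < t0"
        moreover have "s0 \<noteq> t0" using ID[OF s0I] OuD[OF t0O] anti by blast
        ultimately have "t0 < s0" by auto
        then show False using nocyc[OF st, of "ps ! t0" "ps ! s0" x] hp[OF t0l s0l] ID[OF s0I] OuD[OF t0O] by blast
      qed
      have Imax: "\<And>k. k \<in> I \<Longrightarrow> k \<le> s0" using finI s0_def by auto
      have Omin: "\<And>k. k \<in> Ou \<Longrightarrow> t0 \<le> k" using finO t0_def by auto
      have Ieq: "I = {0..<s0+1}"
      proof (intro equalityI subsetI)
        fix k assume "k \<in> I" then show "k \<in> {0..<s0+1}" using Imax by fastforce
      next
        fix k assume k: "k \<in> {0..<s0+1}"
        show "k \<in> I"
        proof (rule ccontr)
          assume kn: "k \<notin> I"
          have "k \<noteq> s0" using kn s0I by auto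
          then have "k < s0" using k by auto
          have "k \<notin> Ou" using Omin \<open>k < s0\<close> st0 by fastforce
          have kl: "k < l" using \<open>k < s0\<close> s0l by auto
          have d: "distinct [ps!k, ps!s0, x, ps!t0]"
            using neq[OF kl s0l] neq[OF kl t0l] neq[OF s0l t0l] nx[OF kl] nx[OF s0l] nx[OF t0l]
              \<open>k < s0\<close> st0 by auto
          have ne: "\<not> E (ps!k) x" using nonadj[OF kl] kn \<open>k \<notin> Ou\<close> by blast
          have h1: "D (ps!k) (ps!s0)" using hp[OF kl s0l] \<open>k < s0\<close> by blast
          have h2: "D (ps!k) (ps!t0)" using hp[OF kl t0l] \<open>k < s0\<close> st0 by auto
          show False
            by (rule no4[OF st inV[OF kl] inV[OF s0l] xV inV[OF t0l] d h1 ID[OF s0I] OuD[OF t0O] h2 ne])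
              (use nx[OF kl] in auto)
        qed
      qed
      have Oeq: "Ou = {t0..<l}"
      proof (intro equalityI subsetI)
        fix k assume "k \<in> Ou" then show "k \<in> {t0..<l}" using Omin Ol by fastforce
      next
        fix k assume k: "k \<in> {t0..<l}"
        show "k \<in> Ou"
        proof (rule ccontr)
          assume kn: "k \<notin> Ou"
          have "k \<noteq> t0" using kn t0O by auto
          then have "t0 < k" using k by auto
          have "k \<notin> I" using Imax \<open>t0 < k\<close> st0 by fastforce
          have kl: "k < l" using k by auto
          have d: "distinct [ps!s0, x, ps!t0, ps!k]"
            using neq[OF kl s0l] neq[OF kl t0l] neq[OF s0l t0l] nx[OF kl] nx[OF s0l] nx[OF t0l]
              \<open>t0 < k\<close> st0 by auto
          have ne: "\<not> E (ps!k) x" using nonadj[OF kl] kn \<open>k \<notin> I\<close> by blast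
          have h1: "D (ps!t0) (ps!k)" using hp[OF t0l kl] \<open>t0 < k\<close> by blast
          have h2: "D (ps!s0) (ps!k)" using hp[OF s0l kl] \<open>t0 < k\<close> st0 by auto
          show False
            by (rule no4[OF st inV[OF s0l] xV inV[OF t0l] inV[OF kl] d ID[OF s0I] OuD[OF t0O] h1 h2 ne])
              (use nx[OF kl] in auto)
        qed
      qed
      have "nbrs_in E x (set ps) =
          {pth ps i | i. 1 \<le> i \<and> i \<le> s0+1} \<union> {pth ps i | i. t0+1 \<le> i \<and> i \<le> length ps}"
        using nb Ieq Oeq pth_img[of 1 ps "s0+1"] pth_img[of "t0+1" ps "length ps"] l_def
        by (simp add: image_Un)
      moreover have "\<forall>i. 1 \<le> i \<and> i \<le> s0+1 \<longrightarrow> D (pth ps i) x"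
        using ID Ieq unfolding pth_def by auto
      moreover have "\<forall>i. t0+1 \<le> i \<and> i \<le> length ps \<longrightarrow> D x (pth ps i)"
      proof (intro allI impI)
        fix i assume i: "t0+1 \<le> i \<and> i \<le> length ps"
        then have "i - 1 \<in> Ou" using Oeq l_def by auto
        then show "D x (pth ps i)" using OuD unfolding pth_def by blast
      qed
      moreover have "t0 + 1 \<le> length ps" using t0l l_def by simp
      moreover have "(1::nat) \<le> s0 + 1" "s0 + 1 < t0 + 1" using st0 by simp_all
      ultimately have "typeC E D ps x" unfolding typeC_def by blast
      then show ?thesis by blast
    qed
  qed
qed

theorem mainTheorem10:
  fixes K1 K2 :: "'a set" and E D :: "'a \<Rightarrow> 'a \<Rightarrow> bool" and m n :: nat
  assumes "coB_graph K1 K2 E" and "card K1 = m" and "card K2 = n"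
    and "semi_transitive (K1 \<union> K2) E D"
  shows "(\<forall>x \<in> K1. \<forall>ps. ham_path D K2 ps \<longrightarrow> typeA E D ps x \<or> typeB E D ps x \<or> typeC E D ps x)
       \<and> (\<forall>x \<in> K2. \<forall>ps. ham_path D K1 ps \<longrightarrow> typeA E D ps x \<or> typeB E D ps x \<or> typeC E D ps x)"
proof -
  have c: "K1 \<inter> K2 = {}" "\<forall>u v. E u v \<longrightarrow> E v u" using assms(1) unfolding coB_graph_def by auto
  show ?thesis
  proof (intro conjI ballI allI impI)
    fix x ps assume x: "x \<in> K1" and h: "ham_path D K2 ps"
    have "K2 \<subseteq> K1 \<union> K2" "x \<in> K1 \<union> K2" "x \<notin> K2" using x c(1) by auto
    then show "typeA E D ps x \<or> typeB E D ps x \<or> typeC E D ps x"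
      using key[OF assms(4) h _ _ _ c(2)] by blast
  next
    fix x ps assume x: "x \<in> K2" and h: "ham_path D K1 ps"
    have "K1 \<subseteq> K1 \<union> K2" "x \<in> K1 \<union> K2" "x \<notin> K1" using x c(1) by auto
    then show "typeA E D ps x \<or> typeB E D ps x \<or> typeC E D ps x"
      using key[OF assms(4) h _ _ _ c(2)] by blast
  qed
qed

end
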